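(* Let $k\ge 1$, let $(A,t)$ be a $\mathcal{C}_k$-algebra and let $U\subseteq A$ be an ultrafilter of $A$. Then $$N=\bigcap_{i=0}^{k-1}\big(t^i(U)\cap \varphi(t^i(U))\big)$$ is a $c$-filter of $A$.
   Context: A De Morgan algebra is a bounded distributive lattice $\langle A,\wedge,\vee,0,1\rangle$ with a unary operation $\sim$ satisfying $\sim\sim x=x$ and $\sim(x\vee y)=\sim x\wedge\sim y$. A modal pseudocomplemented De Morgan algebra ($mpM$-algebra) is an algebra $\langle A,\wedge,\vee,\sim,{}^\ast,0,1\rangle$ such that $\langle A,\wedge,\vee,\sim,0,1\rangle$ is a De Morgan algebra, $x^\ast$ is the pseudocomplement of $x$ (i.e. $x\wedge y=0$ iff $y\le x^\ast$), and $x\vee\sim x\le x\vee x^\ast$ for all $x$. Put $\nabla x=\sim(\sim x\wedge x^\ast)$ and $\triangle x=\sim\nabla\sim x$. For an integer $k\ge1$, a $\mathcal{C}_k$-algebra is a pair $(A,t)$ where $A$ is an $mpM$-algebra and $t:A\to A$ is an automorphism of $mpM$-algebras with $t^k(x)=x$ for all $x$ (where $t^0=\mathrm{id}$, $t^n=t^{n-1}\circ t$). A $c$-filter of $A$ is a lattice filter $F$ of $A$ such that $x\in F$ implies $\triangle x\in F$ and $t(x)\in F$. An ultrafilter is a maximal proper lattice filter. For a prime filter $P$ of $A$, the Birula–Rasiowa transform is $\varphi(P)=A\setminus\{\sim x: x\in P\}$ (again a prime filter). *)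

theory Defs
  imports Main
begin

text \<open>Algebras are taken on a whole type 'a whose bounded distributive lattice
structure is given by the type classes; the De Morgan negation nt and the
pseudocomplement pc are explicit parameters.\<close>

definition de_morgan :: "('a::{distrib_lattice,bounded_lattice} \<Rightarrow> 'a) \<Rightarrow> bool" where
  "de_morgan nt \<longleftrightarrow> (\<forall>x. nt (nt x) = x) \<and> (\<forall>x y. nt (sup x y) = inf (nt x) (nt y))"

definition is_pseudocomplement :: "('a::{distrib_lattice,bounded_lattice} \<Rightarrow> 'a) \<Rightarrow> bool" where
  "is_pseudocomplement pc \<longleftrightarrow> (\<forall>x y. inf x y = bot \<longleftrightarrow> y \<le> pc x)"

definition mpM_algebra :: "('a::{distrib_lattice,bounded_lattice} \<Rightarrow> 'a) \<Rightarrow> ('a \<Rightarrow> 'a) \<Rightarrow> bool" where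
  "mpM_algebra nt pc \<longleftrightarrow> de_morgan nt \<and> is_pseudocomplement pc \<and>
     (\<forall>x. sup x (nt x) \<le> sup x (pc x))"

definition nabla :: "('a::{distrib_lattice,bounded_lattice} \<Rightarrow> 'a) \<Rightarrow> ('a \<Rightarrow> 'a) \<Rightarrow> 'a \<Rightarrow> 'a" where
  "nabla nt pc x = nt (inf (nt x) (pc x))"

definition delta :: "('a::{distrib_lattice,bounded_lattice} \<Rightarrow> 'a) \<Rightarrow> ('a \<Rightarrow> 'a) \<Rightarrow> 'a \<Rightarrow> 'a" where
  "delta nt pc x = nt (nabla nt pc (nt x))"

definition mpM_automorphism ::
  "('a::{distrib_lattice,bounded_lattice} \<Rightarrow> 'a) \<Rightarrow> ('a \<Rightarrow> 'a) \<Rightarrow> ('a \<Rightarrow> 'a) \<Rightarrow> bool" where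
  "mpM_automorphism nt pc t \<longleftrightarrow> bij t \<and>
     (\<forall>x y. t (inf x y) = inf (t x) (t y)) \<and> (\<forall>x y. t (sup x y) = sup (t x) (t y)) \<and>
     (\<forall>x. t (nt x) = nt (t x)) \<and> (\<forall>x. t (pc x) = pc (t x)) \<and>
     t bot = bot \<and> t top = top"

definition Ck_algebra ::
  "nat \<Rightarrow> ('a::{distrib_lattice,bounded_lattice} \<Rightarrow> 'a) \<Rightarrow> ('a \<Rightarrow> 'a) \<Rightarrow> ('a \<Rightarrow> 'a) \<Rightarrow> bool" where
  "Ck_algebra k nt pc t \<longleftrightarrow> mpM_algebra nt pc \<and> mpM_automorphism nt pc t \<and>
     (\<forall>x. (t ^^ k) x = x)"

definition lattice_filter :: "'a::{distrib_lattice,bounded_lattice} set \<Rightarrow> bool" where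
  "lattice_filter F \<longleftrightarrow> F \<noteq> {} \<and> (\<forall>x y. x \<in> F \<longrightarrow> x \<le> y \<longrightarrow> y \<in> F) \<and>
     (\<forall>x y. x \<in> F \<longrightarrow> y \<in> F \<longrightarrow> inf x y \<in> F)"

definition proper_filter :: "'a::{distrib_lattice,bounded_lattice} set \<Rightarrow> bool" where
  "proper_filter F \<longleftrightarrow> lattice_filter F \<and> F \<noteq> UNIV"

definition ultrafilter :: "'a::{distrib_lattice,bounded_lattice} set \<Rightarrow> bool" where
  "ultrafilter U \<longleftrightarrow> proper_filter U \<and> (\<forall>G. proper_filter G \<longrightarrow> U \<subseteq> G \<longrightarrow> G = U)"

definition c_filter ::
  "('a::{distrib_lattice,bounded_lattice} \<Rightarrow> 'a) \<Rightarrow> ('a \<Rightarrow> 'a) \<Rightarrow> ('a \<Rightarrow> 'a) \<Rightarrow> 'a set \<Rightarrow> bool" where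
  "c_filter nt pc t F \<longleftrightarrow> lattice_filter F \<and>
     (\<forall>x\<in>F. delta nt pc x \<in> F) \<and> (\<forall>x\<in>F. t x \<in> F)"

definition br_transform :: "('a \<Rightarrow> 'a) \<Rightarrow> 'a set \<Rightarrow> 'a set" where
  "br_transform nt P = UNIV - nt ` P"

end

theory Submission
  imports Defs
begin

definition primef :: "'a::{distrib_lattice,bounded_lattice} set \<Rightarrow> bool" where
  "primef P \<longleftrightarrow> proper_filter P \<and> (\<forall>a b. sup a b \<in> P \<longrightarrow> a \<in> P \<or> b \<in> P)"

lemma proper_bot:
  assumes "proper_filter (F::'a::{distrib_lattice,bounded_lattice} set)" shows "bot \<notin> F"
proof
  assume "bot \<in> F"
  then have "\<forall>y. y \<in> F" using assms unfolding proper_filter_def lattice_filter_def by auto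
  then show False using assms unfolding proper_filter_def by auto
qed

lemma proper_top:
  assumes "lattice_filter (F::'a::{distrib_lattice,bounded_lattice} set)" shows "top \<in> F"
  using assms unfolding lattice_filter_def by auto

lemma ultra_gen_bot:
  fixes U :: "'a::{distrib_lattice,bounded_lattice} set"
  assumes U: "ultrafilter U" and a: "a \<notin> U"
  shows "\<exists>u\<in>U. inf u a = bot"
proof -
  define G where "G = {y. \<exists>u\<in>U. inf u a \<le> y}"
  have lf: "lattice_filter U" and pf: "proper_filter U" using U unfolding ultrafilter_def proper_filter_def by auto
  have topU: "top \<in> U" using proper_top[OF lf] .
  have "lattice_filter G"
    unfolding lattice_filter_def G_def
  proof (intro conjI allI impI)
    show "{y. \<exists>u\<in>U. inf u a \<le> y} \<noteq> {}" using topU by auto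
  next
    fix x y assume "x \<in> {y. \<exists>u\<in>U. inf u a \<le> y}" "x \<le> y"
    then show "y \<in> {y. \<exists>u\<in>U. inf u a \<le> y}" using order_trans by blast
  next
    fix x y assume "x \<in> {y. \<exists>u\<in>U. inf u a \<le> y}" "y \<in> {y. \<exists>u\<in>U. inf u a \<le> y}"
    then obtain u v where "u \<in> U" "v \<in> U" "inf u a \<le> x" "inf v a \<le> y" by auto
    moreover have "inf u v \<in> U" using lf \<open>u \<in> U\<close> \<open>v \<in> U\<close> unfolding lattice_filter_def by auto
    moreover have "inf (inf u v) a \<le> inf x y"
    proof -
      have "inf (inf u v) a \<le> inf u a" by (simp add: inf.coboundedI1 le_infI1)
      moreover have "inf (inf u v) a \<le> inf v a" by (simp add: inf.coboundedI1 le_infI1)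
      ultimately show ?thesis using \<open>inf u a \<le> x\<close> \<open>inf v a \<le> y\<close> by (meson le_inf_iff order_trans)
    qed
    ultimately show "inf x y \<in> {y. \<exists>u\<in>U. inf u a \<le> y}" by blast
  qed
  moreover have "U \<subseteq> G" unfolding G_def using inf_le1 by blast
  moreover have "a \<in> G" unfolding G_def using topU by auto
  ultimately have "\<not> proper_filter G" using U a unfolding ultrafilter_def by auto
  with \<open>lattice_filter G\<close> have "bot \<in> G" unfolding proper_filter_def by auto
  then show ?thesis unfolding G_def by (auto simp: bot_unique)
qed

lemma ultra_prime:
  fixes U :: "'a::{distrib_lattice,bounded_lattice} set"
  assumes U: "ultrafilter U" shows "primef U"
proof -
  have lf: "lattice_filter U" and pf: "proper_filter U" using U unfolding ultrafilter_def proper_filter_def by auto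
  have "a \<in> U \<or> b \<in> U" if ab: "sup a b \<in> U" for a b
  proof (rule ccontr)
    assume "\<not> (a \<in> U \<or> b \<in> U)"
    then obtain u v where u: "u \<in> U" "inf u a = bot" and v: "v \<in> U" "inf v b = bot"
      using ultra_gen_bot[OF U] by blast
    have w: "inf (inf u v) (sup a b) \<in> U" using lf u v ab unfolding lattice_filter_def by auto
    have "inf (inf u v) (sup a b) = sup (inf (inf u v) a) (inf (inf u v) b)"
      by (simp add: inf_sup_distrib1)
    also have "\<dots> = bot"
    proof -
      have "inf (inf u v) a = bot" using u(2) by (metis inf.commute inf.left_commute inf_bot_right)
      moreover have "inf (inf u v) b = bot" using v(2) by (metis inf_bot_right inf.assoc)
      ultimately show ?thesis by simp
    qed
    finally show False using w proper_bot[OF pf] by simp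
  qed
  then show ?thesis using pf unfolding primef_def by auto
qed

lemma hom_mono:
  fixes f :: "'a::{distrib_lattice,bounded_lattice} \<Rightarrow> 'a"
  assumes "\<forall>x y. f (inf x y) = inf (f x) (f y)" "inj f"
  shows "f x \<le> f y \<longleftrightarrow> x \<le> y"
proof
  assume "f x \<le> f y"
  then have "f (inf x y) = f x" using assms(1) by (simp add: inf_absorb1)
  then have "inf x y = x" using assms(2) by (simp add: inj_eq)
  then show "x \<le> y" by (metis inf.orderI)
next
  assume "x \<le> y" then have "inf x y = x" by (simp add: inf_absorb1)
  then show "f x \<le> f y" using assms(1) by (metis inf.orderI)
qed

lemma image_prime:
  fixes f :: "'a::{distrib_lattice,bounded_lattice} \<Rightarrow> 'a"
  assumes bf: "bij f" and hi: "\<forall>x y. f (inf x y) = inf (f x) (f y)"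
    and hs: "\<forall>x y. f (sup x y) = sup (f x) (f y)" and P: "primef P"
  shows "primef (f ` P)"
proof -
  have inj: "inj f" and surj: "surj f" using bf by (auto simp: bij_def)
  have lf: "lattice_filter P" and ne: "P \<noteq> UNIV" and pr: "\<forall>a b. sup a b \<in> P \<longrightarrow> a \<in> P \<or> b \<in> P"
    using P unfolding primef_def proper_filter_def by auto
  have mem: "f x \<in> f ` P \<longleftrightarrow> x \<in> P" for x using inj by (auto simp: inj_eq)
  have pre: "\<exists>x. y = f x" for y using surj by (metis surjD)
  have "lattice_filter (f ` P)"
    unfolding lattice_filter_def
  proof (intro conjI allI impI)
    show "f ` P \<noteq> {}" using lf unfolding lattice_filter_def by auto
  next
    fix x y assume "x \<in> f ` P" "x \<le> y"
    then obtain x' y' where "x = f x'" "y = f y'" "x' \<in> P" using pre by blast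
    then show "y \<in> f ` P" using \<open>x \<le> y\<close> hom_mono[OF hi inj] lf mem unfolding lattice_filter_def by metis
  next
    fix x y assume "x \<in> f ` P" "y \<in> f ` P"
    then obtain x' y' where "x = f x'" "y = f y'" "x' \<in> P" "y' \<in> P" by blast
    then show "inf x y \<in> f ` P" using hi lf unfolding lattice_filter_def by (metis image_eqI)
  qed
  moreover have "f ` P \<noteq> UNIV"
  proof
    assume "f ` P = UNIV"
    then have "x \<in> P" for x using mem[of x] by auto
    then show False using ne by auto
  qed
  moreover have "a \<in> f ` P \<or> b \<in> f ` P" if "sup a b \<in> f ` P" for a b
  proof -
    obtain a' b' where "a = f a'" "b = f b'" using pre by blast
    then show ?thesis using that hs pr mem by metis
  qed
  ultimately show ?thesis unfolding primef_def proper_filter_def by auto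
qed

lemma funpow_hom:
  fixes t :: "'a::{distrib_lattice,bounded_lattice} \<Rightarrow> 'a"
  assumes "bij t" "\<forall>x y. t (inf x y) = inf (t x) (t y)" "\<forall>x y. t (sup x y) = sup (t x) (t y)"
  shows "bij (t ^^ i) \<and> (\<forall>x y. (t^^i) (inf x y) = inf ((t^^i) x) ((t^^i) y))
     \<and> (\<forall>x y. (t^^i) (sup x y) = sup ((t^^i) x) ((t^^i) y))"
proof (induction i)
  case 0 then show ?case by (simp add: bij_id[unfolded id_def])
next
  case (Suc i)
  have "bij (t ^^ Suc i)" unfolding funpow.simps using Suc assms(1) by (blast intro: bij_comp)
  then show ?case using Suc assms by (simp del: funpow.simps add: funpow_Suc_right[symmetric]) (simp add: comp_def)
qed

context
  fixes nt pc :: "'a::{distrib_lattice,bounded_lattice} \<Rightarrow> 'a"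
  assumes M: "mpM_algebra nt pc"
begin

lemma nn: "nt (nt x) = x" using M unfolding mpM_algebra_def de_morgan_def by auto
lemma ns: "nt (sup x y) = inf (nt x) (nt y)" using M unfolding mpM_algebra_def de_morgan_def by auto
lemma ni: "nt (inf x y) = sup (nt x) (nt y)"
  by (metis nn ns)
lemma nmono: "x \<le> y \<Longrightarrow> nt y \<le> nt x"
proof -
  assume "x \<le> y"
  then have "nt y = nt (sup x y)" by (simp add: sup_absorb2)
  also have "\<dots> = inf (nt x) (nt y)" by (rule ns)
  finally show "nt y \<le> nt x" by (metis inf_le1)
qed
lemma ntop: "nt top = bot"
  by (metis bot_unique nmono nn top_greatest)
lemma ax: "sup x (nt x) \<le> sup x (pc x)" using M unfolding mpM_algebra_def by auto
lemma pcb: "inf x (pc x) = bot" using M unfolding mpM_algebra_def is_pseudocomplement_def by auto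

lemma br_mem: "x \<in> br_transform nt V \<longleftrightarrow> nt x \<notin> V"
  unfolding br_transform_def by (metis DiffD2 DiffI UNIV_I image_eqI imageE nn)

lemma delta_eq: "delta nt pc x = inf x (pc (nt x))"
  unfolding delta_def nabla_def by (simp add: nn)

lemma ax2: "inf x (nt (pc (nt x))) \<le> nt x"
proof -
  have "sup (nt x) x \<le> sup (nt x) (pc (nt x))" using ax[of "nt x"] by (simp add: nn)
  then have "nt (sup (nt x) (pc (nt x))) \<le> nt (sup (nt x) x)" by (rule nmono)
  then have "inf x (nt (pc (nt x))) \<le> inf (nt x) x" by (simp add: ns nn inf_commute)
  then show ?thesis by (meson inf_le1 order_trans)
qed

lemma S_props:
  assumes P: "primef V"
  shows "top \<in> V \<inter> br_transform nt V"
    and "x \<in> V \<inter> br_transform nt V \<Longrightarrow> x \<le> y \<Longrightarrow> y \<in> V \<inter> br_transform nt V"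
    and "x \<in> V \<inter> br_transform nt V \<Longrightarrow> y \<in> V \<inter> br_transform nt V \<Longrightarrow> inf x y \<in> V \<inter> br_transform nt V"
    and "x \<in> V \<inter> br_transform nt V \<Longrightarrow> delta nt pc x \<in> V \<inter> br_transform nt V"
proof -
  have lf: "lattice_filter V" and pf: "proper_filter V" and pr: "\<And>a b. sup a b \<in> V \<Longrightarrow> a \<in> V \<or> b \<in> V"
    using P unfolding primef_def proper_filter_def by auto
  have up: "\<And>a b. a \<in> V \<Longrightarrow> a \<le> b \<Longrightarrow> b \<in> V" and mi: "\<And>a b. a \<in> V \<Longrightarrow> b \<in> V \<Longrightarrow> inf a b \<in> V"
    using lf unfolding lattice_filter_def by auto
  have nb: "bot \<notin> V" using proper_bot[OF pf] .
  show "top \<in> V \<inter> br_transform nt V" using proper_top[OF lf] nb by (simp add: br_mem ntop)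
  show "x \<in> V \<inter> br_transform nt V \<Longrightarrow> x \<le> y \<Longrightarrow> y \<in> V \<inter> br_transform nt V"
    using up nmono by (auto simp: br_mem)
  show "x \<in> V \<inter> br_transform nt V \<Longrightarrow> y \<in> V \<inter> br_transform nt V \<Longrightarrow> inf x y \<in> V \<inter> br_transform nt V"
    using mi pr by (auto simp: br_mem ni)
  assume x: "x \<in> V \<inter> br_transform nt V"
  then have xV: "x \<in> V" and nxV: "nt x \<notin> V" by (auto simp: br_mem)
  have "sup (nt x) x \<in> V" using up xV by (metis sup_ge2)
  then have "sup (nt x) (pc (nt x)) \<in> V" using up ax[of "nt x"] by (simp add: nn)
  then have zV: "pc (nt x) \<in> V" using pr nxV by blast
  have dV: "delta nt pc x \<in> V" using mi[OF xV zV] by (simp add: delta_eq)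
  have "nt (pc (nt x)) \<notin> V"
  proof
    assume "nt (pc (nt x)) \<in> V"
    then have "inf x (nt (pc (nt x))) \<in> V" using mi xV by blast
    then show False using up ax2 nxV by blast
  qed
  then have "nt (delta nt pc x) \<notin> V" using pr nxV by (auto simp: delta_eq ni)
  then show "delta nt pc x \<in> V \<inter> br_transform nt V" using dV by (simp add: br_mem)
qed

end

theorem proposition2p4:
  fixes k :: nat
    and nt pc t :: "'a::{distrib_lattice,bounded_lattice} \<Rightarrow> 'a"
    and U :: "'a set"
  assumes "k \<ge> 1"
    and "Ck_algebra k nt pc t"
    and "ultrafilter U"
  shows "c_filter nt pc t
           (\<Inter>i\<in>{0..<k}. (t ^^ i) ` U \<inter> br_transform nt ((t ^^ i) ` U))"
proof -
  have M: "mpM_algebra nt pc" and A: "mpM_automorphism nt pc t" and K: "\<And>x. (t ^^ k) x = x"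
    using assms(2) unfolding Ck_algebra_def by auto
  have bt: "bij t" and ti: "\<forall>x y. t (inf x y) = inf (t x) (t y)" and ts: "\<forall>x y. t (sup x y) = sup (t x) (t y)"
    and tn: "\<And>x. t (nt x) = nt (t x)"
    using A unfolding mpM_automorphism_def by auto
  have injt: "inj t" using bt by (simp add: bij_def)
  define V where "V i = (t ^^ i) ` U" for i
  have PV: "primef (V i)" for i
  proof -
    have h: "bij (t ^^ i) \<and> (\<forall>x y. (t^^i) (inf x y) = inf ((t^^i) x) ((t^^i) y))
     \<and> (\<forall>x y. (t^^i) (sup x y) = sup ((t^^i) x) ((t^^i) y))" by (rule funpow_hom[OF bt ti ts])
    show ?thesis unfolding V_def
      by (rule image_prime) (use h ultra_prime[OF assms(3)] in auto)
  qed
  have tV: "t ` V i = V (Suc i)" for i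
    unfolding V_def by (simp add: image_image)
  have Vk: "V k = V 0" unfolding V_def using K by simp
  define N where "N = (\<Inter>i\<in>{0..<k}. V i \<inter> br_transform nt (V i))"
  have memN: "x \<in> N \<longleftrightarrow> (\<forall>i<k. x \<in> V i \<inter> br_transform nt (V i))" for x
    unfolding N_def by (simp add: atLeast0LessThan lessThan_def)
  note SP = S_props[OF M PV]
  have "lattice_filter N"
    unfolding lattice_filter_def
  proof (intro conjI allI impI)
    show "N \<noteq> {}" using SP(1) memN by blast
  next
    fix x y assume "x \<in> N" "x \<le> y" then show "y \<in> N" using SP(2) memN by blast
  next
    fix x y assume "x \<in> N" "y \<in> N" then show "inf x y \<in> N" using SP(3) memN by blast
  qed
  moreover have "\<forall>x\<in>N. delta nt pc x \<in> N" using SP(4) memN by blast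
  moreover have "\<forall>x\<in>N. t x \<in> N"
  proof
    fix x assume xN: "x \<in> N"
    have "t x \<in> V j \<inter> br_transform nt (V j)" if j: "j < k" for j
    proof -
      obtain i where i: "i < k" "V j = V (Suc i)"
      proof (cases j)
        case 0 then show ?thesis using that[of "k - 1"] assms(1) Vk by auto
      next
        case (Suc i) then show ?thesis using that[of i] j by auto
      qed
      have "x \<in> V i" "nt x \<notin> V i" using xN i(1) memN[of x] br_mem[OF M, of x "V i"] by auto
      then have "t x \<in> t ` V i" "t (nt x) \<notin> t ` V i" using injt by (auto simp: inj_image_mem_iff)
      then show ?thesis using i(2) tV[of i] tn[of x] br_mem[OF M, of "t x" "V j"] by auto
    qed
    then show "t x \<in> N" using memN by blast
  qed
  ultimately have CN: "c_filter nt pc t N" unfolding c_filter_def by (intro conjI)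
  have NE: "(\<Inter>i\<in>{0..<k}. (t ^^ i) ` U \<inter> br_transform nt ((t ^^ i) ` U)) = N"
    unfolding N_def V_def by (rule refl)
  show ?thesis unfolding NE by (rule CN)
qed

end
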